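(* Assume that $d^u_{ij}-\nu s_{ij}\ge 0$ and $d^p_{ij}\ge 0$ for all $j\neq i$ (the entries $d^u_{ij}$ evaluated at the current solution). Let $\mathbf u_i(t)\in\mathbb R^d$ (continuously differentiable) and $p_i(t)\in\mathbb R$, $i=1,\dots,N_h$, solve the semi-discrete scheme (S1)–(S2) on a time interval. For $i\neq j$ define $$F_{ij}=\frac{\tilde a_{ij}}{2}|\mathbf u_j-\mathbf u_i|^2+\frac12\,\mathbf c_{ij}\cdot(\mathbf u_j-\mathbf u_i)\,(p_j-p_i)-\Big(\frac{\mathbf u_j+\mathbf u_i}{2}\cdot\mathbf c_{ij}\Big)\Big(\frac{|\mathbf u_j|^2}{2}+p_j+\frac{|\mathbf u_i|^2}{2}+p_i\Big)+(d^u_{ij}-\nu s_{ij})\Big(\frac{|\mathbf u_j|^2}{2}-\frac{|\mathbf u_i|^2}{2}\Big)+d^p_{ij}\Big(\frac{p_j^2}{2}-\frac{p_i^2}{2}\Big),$$ $$G_{ij}=-(d^u_{ij}-\nu s_{ij})\frac{|\mathbf u_j-\mathbf u_i|^2}{2}-d^p_{ij}\frac{(p_j-p_i)^2}{2}.$$ Then: (i) $F_{ij}=-F_{ji}$ and $G_{ij}=G_{ji}$; (ii) for every $i$, $$m_i\frac{d}{dt}\eta(\mathbf u_i)=\sum_{j\in\mathcal N_i\setminus\{i\}}\big(F_{ij}+G_{ij}\big),\qquad\text{hence}\qquad m_i\frac{d}{dt}\eta(\mathbf u_i)-\sum_{j\in\mathcal N_i\setminus\{i\}}F_{ij}\le 0;$$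 (iii) whenever $\mathbf c_{ij}\neq 0$, the numerical energy flux $\mathcal Q(\mathbf u_i,p_i,\mathbf u_j,p_j;\mathbf n_{ij}):=-F_{ij}/(2|\mathbf c_{ij}|)$, $\mathbf n_{ij}=\mathbf c_{ij}/|\mathbf c_{ij}|$, is consistent with the energy flux in the sense that for $\mathbf u_i=\mathbf u_j=\mathbf u$, $p_i=p_j=p$ it equals $(\eta(\mathbf u)+p)\,\mathbf u\cdot\mathbf n_{ij}$. Consequently $m_i\frac{d}{dt}\eta(\mathbf u_i)+\sum_{j\in\mathcal N_i\setminus\{i\}}2|\mathbf c_{ij}|\,\mathcal Q(\mathbf u_i,p_i,\mathbf u_j,p_j;\mathbf n_{ij})\le 0$ (sum over $j$ with $\mathbf c_{ij}\ne0$, the remaining $F_{ij}$ being included as $-F_{ij}$).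
   Context: Setting. Let $d\in\{2,3\}$ and let $\Omega\subset\mathbb R^d$ be a box on which periodic boundary conditions are imposed (all functions on $\Omega$ are periodic, so $\Omega$ is effectively a flat torus and integration by parts produces no boundary terms). $\mathcal T_h$ is a conforming simplicial mesh of $\Omega$ compatible with periodicity, with (periodically identified) vertices $\mathbf x_1,\dots,\mathbf x_{N_h}$; $\varphi_1,\dots,\varphi_{N_h}$ are the continuous piecewise-linear Lagrange basis functions ($\varphi_i(\mathbf x_j)=\delta_{ij}$), $V_h=\mathrm{span}\{\varphi_i\}$, $\mathbf V_h=(V_h)^d$. For $v_h\in V_h$ write $v_i=v_h(\mathbf x_i)$; similarly $\mathbf u_h=\sum_j\mathbf u_j\varphi_j$ for vector-valued functions. $\mathcal N_i$ is the set of indices $j$ (including $j=i$) for which the supports of $\varphi_i,\varphi_j$ overlap. Coefficients: $m_{ij}=\int_\Omega\varphi_i\varphi_j\,dx$, $m_i=\int_\Omega\varphi_i\,dx$, $\mathbf c_{ij}=\int_\Omega\varphi_i\nabla\varphi_j\,dx$, $s_{ij}=\int_\Omega\nabla\varphi_i\cdot\nabla\varphi_j\,dx$, and, for a given $\mathbf u_h=\sum_j\mathbf u_j\varphi_j$, $\tilde a_{ij}=\frac{\mathbf u_i+\mathbf u_j}{2}\cdot\mathbf c_{ij}$ and $a_{ij}=\frac12\int_\Omega[\varphi_i\,\mathbf u_h\cdot\nabla\varphi_j-\varphi_j\,\mathbf u_h\cdot\nabla\varphi_i]\,dx$. The kinetic energy is $\eta(\mathbf u)=|\mathbf u|^2/2$.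 Scheme. Given a viscosity $\nu\ge 0$ and symmetric matrices $D^u=(d^u_{ij})$, $D^p=(d^p_{ij})$ with zero row sums ($\sum_j d^u_{ij}=\sum_j d^p_{ij}=0$) and $d^u_{ij}=d^p_{ij}=0$ for $j\notin\mathcal N_i$ (the entries $d^u_{ij}$ may depend on the current velocity), the semi-discrete scheme is the system, for all $i,k=1,\dots,N_h$, (S1) $m_i\frac{d\mathbf u_i}{dt}=\sum_{j\in\mathcal N_i}\big[(d^u_{ij}-\tilde a_{ij}-\nu s_{ij})\mathbf u_j-\mathbf c_{ij}p_j\big]$, (S2) $0=\sum_{j\in\mathcal N_k}\big[d^p_{kj}p_j-\mathbf c_{kj}\cdot\mathbf u_j\big]$, where $\tilde a_{ij}$ is computed from the current $\mathbf u_h(t)$. *)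

theory Defs
  imports "HOL-Analysis.Analysis"
begin

definition eta :: "real^'d \<Rightarrow> real" where
  "eta v = (norm v)^2 / 2"

text \<open>Structural properties of the P1 finite element coefficients on the periodic mesh
  (vertex indices I = {1..N}, stencils Nb i): the stencil contains i and lies in I;
  c_ij = int phi_i grad phi_j is skew-symmetric (integration by parts on the torus);
  s_ij = int grad phi_i . grad phi_j is symmetric with zero row sums
  (partition of unity).  These are the only properties of the coefficients used.\<close>
definition periodic_P1_coeffs ::
  "nat set \<Rightarrow> (nat \<Rightarrow> nat set) \<Rightarrow> (nat \<Rightarrow> nat \<Rightarrow> real^'d) \<Rightarrow> (nat \<Rightarrow> nat \<Rightarrow> real) \<Rightarrow> bool" where
  "periodic_P1_coeffs I Nb c s \<longleftrightarrow>
     finite I \<and>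
     (\<forall>i\<in>I. i \<in> Nb i \<and> Nb i \<subseteq> I) \<and>
     (\<forall>i\<in>I. \<forall>j\<in>I. j \<in> Nb i \<longleftrightarrow> i \<in> Nb j) \<and>
     (\<forall>i\<in>I. \<forall>j\<in>I. c i j = - c j i) \<and>
     (\<forall>i\<in>I. \<forall>j\<in>I. s i j = s j i) \<and>
     (\<forall>i\<in>I. (\<Sum>j\<in>Nb i. s i j) = 0)"

definition atilde :: "real^'d \<Rightarrow> real^'d \<Rightarrow> real^'d \<Rightarrow> real" where
  "atilde cij ui uj = ((ui + uj) /\<^sub>R 2) \<bullet> cij"

text \<open>F_ij as a function of c_ij, du = d^u_ij - nu s_ij, dp = d^p_ij and the two states.\<close>
definition Fflux :: "real^'d \<Rightarrow> real \<Rightarrow> real \<Rightarrow> real^'d \<Rightarrow> real \<Rightarrow> real^'d \<Rightarrow> real \<Rightarrow> real" where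
  "Fflux cij du dp ui p_i uj p_j =
     atilde cij ui uj / 2 * (norm (uj - ui))^2
     + 1/2 * (cij \<bullet> (uj - ui)) * (p_j - p_i)
     - (((uj + ui) /\<^sub>R 2) \<bullet> cij) * ((norm uj)^2/2 + p_j + (norm ui)^2/2 + p_i)
     + du * ((norm uj)^2/2 - (norm ui)^2/2)
     + dp * (p_j^2/2 - p_i^2/2)"

definition Gdiss :: "real \<Rightarrow> real \<Rightarrow> real^'d \<Rightarrow> real \<Rightarrow> real^'d \<Rightarrow> real \<Rightarrow> real" where
  "Gdiss du dp ui p_i uj p_j = - du * (norm (uj - ui))^2 / 2 - dp * (p_j - p_i)^2 / 2"

definition Qflux :: "real^'d \<Rightarrow> real \<Rightarrow> real \<Rightarrow> real^'d \<Rightarrow> real \<Rightarrow> real^'d \<Rightarrow> real \<Rightarrow> real" where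
  "Qflux cij du dp ui p_i uj p_j = - Fflux cij du dp ui p_i uj p_j / (2 * norm cij)"

end

theory Submission
  imports Defs
begin

lemma deriv_sq: fixes u :: "real \<Rightarrow> real^'d"
  assumes h: "(u has_derivative (\<lambda>h. h *\<^sub>R v)) (at t)"
  shows "((\<lambda>\<tau>. u \<tau> \<bullet> u \<tau> / 2) has_real_derivative (u t \<bullet> v)) (at t)"
proof -
  have "((\<lambda>\<tau>. u \<tau> \<bullet> u \<tau>) has_derivative (\<lambda>h. u t \<bullet> (h *\<^sub>R v) + (h *\<^sub>R v) \<bullet> u t)) (at t)"
    by (rule has_derivative_inner[OF h h])
  moreover have "(\<lambda>h. u t \<bullet> (h *\<^sub>R v) + (h *\<^sub>R v) \<bullet> u t) = (\<lambda>h. (2 * (u t \<bullet> v)) * h)"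
    by (auto simp: inner_commute algebra_simps)
  ultimately have "((\<lambda>\<tau>. u \<tau> \<bullet> u \<tau>) has_real_derivative (2 * (u t \<bullet> v))) (at t)"
    by (simp add: has_field_derivative_def)
  from DERIV_cdivide[OF this, of 2] show ?thesis by simp
qed

lemma Gneg_lem:
  fixes x y :: "real^'d"
  assumes "l \<ge> 0" "dpv \<ge> 0"
  shows "Gdiss l dpv x pI y pJ \<le> 0"
proof -
  have "l * (norm (y - x))^2 \<ge> 0" "dpv * (pJ - pI)^2 \<ge> 0" using assms by simp_all
  then show ?thesis unfolding Gdiss_def by linarith
qed

lemma key:
  fixes x y cv :: "real^'d"
  shows "Fflux cv l dpv x pI y pj + Gdiss l dpv x pI y pj =
     l*(x\<bullet>y) - l*(x\<bullet>x) - atilde cv x y*(x\<bullet>y) - pj*(cv\<bullet>x) + pI*(dpv*pj - cv\<bullet>y) - dpv*pI^2"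
  unfolding Fflux_def Gdiss_def atilde_def power2_norm_eq_inner
  apply (simp add: inner_diff_left inner_diff_right inner_add_left inner_add_right inner_commute)
  apply (simp add: field_simps power2_eq_square)
  done
lemma antiF:
  fixes x y cv :: "real^'d"
  shows "Fflux (-cv) l dpv y pj x pI = - Fflux cv l dpv x pI y pj"
  unfolding Fflux_def atilde_def power2_norm_eq_inner
  apply (simp add: inner_minus_left inner_minus_right inner_diff_left inner_diff_right inner_add_left inner_add_right inner_commute)
  apply (simp add: field_simps power2_eq_square)
  done
lemma consQ:
  fixes v cij :: "real^'d"
  assumes "cij \<noteq> 0"
  shows "Qflux cij du0 dp0 v q v q = (eta v + q) * (v \<bullet> (cij /\<^sub>R norm cij))"
  using assms unfolding Qflux_def Fflux_def atilde_def eta_def power2_norm_eq_inner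
  apply (simp add: inner_add_left inner_add_right inner_commute)
  apply (simp add: field_simps)
  done
theorem theorem1:
  fixes N :: nat and Nb :: "nat \<Rightarrow> nat set"
    and m :: "nat \<Rightarrow> real" and c :: "nat \<Rightarrow> nat \<Rightarrow> real^'d" and s :: "nat \<Rightarrow> nat \<Rightarrow> real"
    and \<nu> :: real and du dp :: "real \<Rightarrow> nat \<Rightarrow> nat \<Rightarrow> real"
    and u u' :: "nat \<Rightarrow> real \<Rightarrow> real^'d" and p :: "nat \<Rightarrow> real \<Rightarrow> real"
    and a b :: real
  assumes dim: "CARD('d) = 2 \<or> CARD('d) = 3"
    and coeffs: "periodic_P1_coeffs {1..N} Nb c s"
    and nu: "\<nu> \<ge> 0"
    and ab: "a < b"
    and du_sym: "\<And>t i j. t \<in> {a<..<b} \<Longrightarrow> i \<in> {1..N} \<Longrightarrow> j \<in> {1..N} \<Longrightarrow> du t i j = du t j i"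
    and dp_sym: "\<And>t i j. t \<in> {a<..<b} \<Longrightarrow> i \<in> {1..N} \<Longrightarrow> j \<in> {1..N} \<Longrightarrow> dp t i j = dp t j i"
    and du_row: "\<And>t i. t \<in> {a<..<b} \<Longrightarrow> i \<in> {1..N} \<Longrightarrow> (\<Sum>j\<in>Nb i. du t i j) = 0"
    and dp_row: "\<And>t i. t \<in> {a<..<b} \<Longrightarrow> i \<in> {1..N} \<Longrightarrow> (\<Sum>j\<in>Nb i. dp t i j) = 0"
    and du_supp: "\<And>t i j. t \<in> {a<..<b} \<Longrightarrow> i \<in> {1..N} \<Longrightarrow> j \<in> {1..N} \<Longrightarrow> j \<notin> Nb i \<Longrightarrow> du t i j = 0"
    and dp_supp: "\<And>t i j. t \<in> {a<..<b} \<Longrightarrow> i \<in> {1..N} \<Longrightarrow> j \<in> {1..N} \<Longrightarrow> j \<notin> Nb i \<Longrightarrow> dp t i j = 0"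
    and du_pos: "\<And>t i j. t \<in> {a<..<b} \<Longrightarrow> i \<in> {1..N} \<Longrightarrow> j \<in> Nb i \<Longrightarrow> j \<noteq> i \<Longrightarrow> du t i j - \<nu> * s i j \<ge> 0"
    and dp_pos: "\<And>t i j. t \<in> {a<..<b} \<Longrightarrow> i \<in> {1..N} \<Longrightarrow> j \<in> Nb i \<Longrightarrow> j \<noteq> i \<Longrightarrow> dp t i j \<ge> 0"
    and u_deriv: "\<And>t i. t \<in> {a<..<b} \<Longrightarrow> i \<in> {1..N} \<Longrightarrow> (u i has_vector_derivative u' i t) (at t)"
    and u'_cont: "\<And>i. i \<in> {1..N} \<Longrightarrow> continuous_on {a<..<b} (u' i)"
    and S1: "\<And>t i. t \<in> {a<..<b} \<Longrightarrow> i \<in> {1..N} \<Longrightarrow>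
       m i *\<^sub>R u' i t = (\<Sum>j\<in>Nb i. (du t i j - atilde (c i j) (u i t) (u j t) - \<nu> * s i j) *\<^sub>R u j t
                                        - p j t *\<^sub>R c i j)"
    and S2: "\<And>t k. t \<in> {a<..<b} \<Longrightarrow> k \<in> {1..N} \<Longrightarrow>
       0 = (\<Sum>j\<in>Nb k. dp t k j * p j t - c k j \<bullet> u j t)"
  defines "F \<equiv> \<lambda>t i j. Fflux (c i j) (du t i j - \<nu> * s i j) (dp t i j) (u i t) (p i t) (u j t) (p j t)"
    and "G \<equiv> \<lambda>t i j. Gdiss (du t i j - \<nu> * s i j) (dp t i j) (u i t) (p i t) (u j t) (p j t)"
    and "Q \<equiv> \<lambda>t i j. Qflux (c i j) (du t i j - \<nu> * s i j) (dp t i j) (u i t) (p i t) (u j t) (p j t)"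
  shows
    "(\<forall>t\<in>{a<..<b}. \<forall>i\<in>{1..N}. \<forall>j\<in>{1..N}. i \<noteq> j \<longrightarrow> F t i j = - F t j i \<and> G t i j = G t j i)
     \<and> (\<forall>t\<in>{a<..<b}. \<forall>i\<in>{1..N}. \<exists>D. ((\<lambda>\<tau>. eta (u i \<tau>)) has_real_derivative D) (at t)
          \<and> m i * D = (\<Sum>j\<in>Nb i - {i}. F t i j + G t i j)
          \<and> m i * D - (\<Sum>j\<in>Nb i - {i}. F t i j) \<le> 0
          \<and> m i * D + (\<Sum>j\<in>{j\<in>Nb i - {i}. c i j \<noteq> 0}. 2 * norm (c i j) * Q t i j)
                   - (\<Sum>j\<in>{j\<in>Nb i - {i}. c i j = 0}. F t i j) \<le> 0)
     \<and> (\<forall>(cij::real^'d) du0 dp0 v q. cij \<noteq> 0 \<longrightarrow>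
          Qflux cij du0 dp0 v q v q = (eta v + q) * (v \<bullet> (cij /\<^sub>R norm cij)))"
  proof -
  have fin: "finite {1..N}" and nbI: "\<And>i. i \<in> {1..N} \<Longrightarrow> i \<in> Nb i \<and> Nb i \<subseteq> {1..N}"
    and cskew: "\<And>i j. i \<in> {1..N} \<Longrightarrow> j \<in> {1..N} \<Longrightarrow> c i j = - c j i"
    and ssym: "\<And>i j. i \<in> {1..N} \<Longrightarrow> j \<in> {1..N} \<Longrightarrow> s i j = s j i"
    and srow: "\<And>i. i \<in> {1..N} \<Longrightarrow> (\<Sum>j\<in>Nb i. s i j) = 0"
  proof -
    have cc: "finite {1..N} \<and>
     (\<forall>i\<in>{1..N}. i \<in> Nb i \<and> Nb i \<subseteq> {1..N}) \<and>
     (\<forall>i\<in>{1..N}. \<forall>j\<in>{1..N}. j \<in> Nb i \<longleftrightarrow> i \<in> Nb j) \<and>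
     (\<forall>i\<in>{1..N}. \<forall>j\<in>{1..N}. c i j = - c j i) \<and>
     (\<forall>i\<in>{1..N}. \<forall>j\<in>{1..N}. s i j = s j i) \<and>
     (\<forall>i\<in>{1..N}. (\<Sum>j\<in>Nb i. s i j) = 0)"
      using coeffs unfolding periodic_P1_coeffs_def .
    show "finite {1..N}" by simp
    show "\<And>i. i \<in> {1..N} \<Longrightarrow> i \<in> Nb i \<and> Nb i \<subseteq> {1..N}" using cc by blast
    show "\<And>i j. i \<in> {1..N} \<Longrightarrow> j \<in> {1..N} \<Longrightarrow> c i j = - c j i" using cc by blast
    show "\<And>i j. i \<in> {1..N} \<Longrightarrow> j \<in> {1..N} \<Longrightarrow> s i j = s j i" using cc by blast
    show "\<And>i. i \<in> {1..N} \<Longrightarrow> (\<Sum>j\<in>Nb i. s i j) = 0" using cc by blast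
  qed
  have cii: "c i i = 0" if "i \<in> {1..N}" for i
  proof -
    have h: "- c i i = c i i" using cskew[OF that that] by simp
    have "(2::real) *\<^sub>R c i i = c i i - (- c i i)" by (simp add: scaleR_2)
    also have "\<dots> = 0" unfolding h by simp
    finally show ?thesis by simp
  qed
  have P1: "\<forall>t\<in>{a<..<b}. \<forall>i\<in>{1..N}. \<forall>j\<in>{1..N}. i \<noteq> j \<longrightarrow> F t i j = - F t j i \<and> G t i j = G t j i"
  proof (intro ballI impI conjI)
    fix t i j assume t: "t \<in> {a<..<b}" and i: "i \<in> {1..N}" and j: "j \<in> {1..N}"
    show "F t i j = - F t j i"
      unfolding F_def using antiF[of "c j i" "du t j i - \<nu> * s j i" "dp t j i" "u i t" "p i t" "u j t" "p j t"]
      by (simp add: cskew[OF i j] du_sym[OF t i j] dp_sym[OF t i j] ssym[OF i j])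
    show "G t i j = G t j i"
      unfolding G_def Gdiss_def using du_sym[OF t i j] dp_sym[OF t i j] ssym[OF i j]
      by (simp add: norm_minus_commute power2_commute)
  qed
  have P2: "\<forall>t\<in>{a<..<b}. \<forall>i\<in>{1..N}. \<exists>D. ((\<lambda>\<tau>. eta (u i \<tau>)) has_real_derivative D) (at t)
          \<and> m i * D = (\<Sum>j\<in>Nb i - {i}. F t i j + G t i j)
          \<and> m i * D - (\<Sum>j\<in>Nb i - {i}. F t i j) \<le> 0
          \<and> m i * D + (\<Sum>j\<in>{j\<in>Nb i - {i}. c i j \<noteq> 0}. 2 * norm (c i j) * Q t i j)
                   - (\<Sum>j\<in>{j\<in>Nb i - {i}. c i j = 0}. F t i j) \<le> 0"
  proof (intro ballI)
    fix t i assume t: "t \<in> {a<..<b}" and i: "i \<in> {1..N}"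
    have NbI: "Nb i \<subseteq> {1..N}" and iin: "i \<in> Nb i" using nbI[OF i] by auto
    have finNb: "finite (Nb i)" using NbI fin finite_subset by blast
    define D where "D = u i t \<bullet> u' i t"
    have der: "((\<lambda>\<tau>. eta (u i \<tau>)) has_real_derivative D) (at t)"
    proof -
      have h: "(u i has_derivative (\<lambda>h. h *\<^sub>R u' i t)) (at t)"
        using u_deriv[OF t i] by (simp add: has_vector_derivative_def)
      show ?thesis using deriv_sq[OF h] by (simp add: D_def eta_def power2_norm_eq_inner)
    qed
    define l where "l = (\<lambda>j. du t i j - \<nu> * s i j)"
    define E where "E = (\<lambda>j. l j*(u i t\<bullet>u j t) - l j*(u i t\<bullet>u i t) - atilde (c i j) (u i t) (u j t)*(u i t\<bullet>u j t)
         - p j t*(c i j\<bullet>u i t) + p i t*(dp t i j*p j t - c i j\<bullet>u j t) - dp t i j*(p i t)^2)"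
    have FGE: "F t i j + G t i j = E j" for j
      unfolding F_def G_def E_def l_def by (rule key)
    have Ei: "E i = 0"
      unfolding E_def by (simp add: cii[OF i] atilde_def power2_eq_square)
    have sumFG: "(\<Sum>j\<in>Nb i - {i}. F t i j + G t i j) = (\<Sum>j\<in>Nb i. E j)"
      using FGE Ei finNb iin by (simp add: sum.remove[of "Nb i" i E])
    have lrow: "(\<Sum>j\<in>Nb i. l j) = 0"
      unfolding l_def using du_row[OF t i] srow[OF i] by (simp add: sum_subtractf sum_distrib_left[symmetric])
    define A where "A = (\<lambda>j. l j*(u i t\<bullet>u j t) - atilde (c i j) (u i t) (u j t)*(u i t\<bullet>u j t)
         - p j t*(c i j\<bullet>u i t))"
    have Ej: "E j = A j - (u i t\<bullet>u i t) * l j + p i t * (dp t i j*p j t - c i j\<bullet>u j t) - (p i t)^2 * dp t i j" for j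
      unfolding E_def A_def by (simp add: algebra_simps)
    have "(\<Sum>j\<in>Nb i. E j) = (\<Sum>j\<in>Nb i. A j) - (u i t\<bullet>u i t) * (\<Sum>j\<in>Nb i. l j)
         + p i t * (\<Sum>j\<in>Nb i. dp t i j*p j t - c i j\<bullet>u j t) - (p i t)^2 * (\<Sum>j\<in>Nb i. dp t i j)"
      unfolding Ej by (simp only: sum.distrib sum_subtractf sum_distrib_left[symmetric])
    also have "\<dots> = (\<Sum>j\<in>Nb i. A j)"
      using lrow S2[OF t i] dp_row[OF t i] by simp
    also have "\<dots> = u i t \<bullet> (m i *\<^sub>R u' i t)"
      unfolding S1[OF t i] inner_sum_right
    proof (rule sum.cong[OF refl])
      fix j show "A j = u i t \<bullet> ((du t i j - atilde (c i j) (u i t) (u j t) - \<nu> * s i j) *\<^sub>R u j t - p j t *\<^sub>R c i j)"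
        unfolding A_def l_def inner_diff_right inner_scaleR_right by (simp add: inner_commute algebra_simps)
    qed
    also have "\<dots> = m i * D" by (simp add: D_def)
    finally have eqD: "m i * D = (\<Sum>j\<in>Nb i - {i}. F t i j + G t i j)" using sumFG by simp
    have Gneg: "G t i j \<le> 0" if "j \<in> Nb i - {i}" for j
    proof -
      have "du t i j - \<nu> * s i j \<ge> 0" "dp t i j \<ge> 0" using du_pos[OF t i] dp_pos[OF t i] that by auto
      then show ?thesis unfolding G_def by (rule Gneg_lem)
    qed
    have ineq: "m i * D - (\<Sum>j\<in>Nb i - {i}. F t i j) \<le> 0"
    proof -
      have "(\<Sum>j\<in>Nb i - {i}. G t i j) \<le> 0" using Gneg by (rule sum_nonpos)
      then show ?thesis using eqD by (simp add: sum.distrib)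
    qed
    have QF: "2 * norm (c i j) * Q t i j = - F t i j" if "c i j \<noteq> 0" for j
      using that unfolding Q_def F_def Qflux_def by simp
    have finS: "finite (Nb i - {i})" using finNb by simp
    have split: "(\<Sum>j\<in>Nb i - {i}. F t i j) = (\<Sum>j\<in>{j\<in>Nb i - {i}. c i j \<noteq> 0}. F t i j) + (\<Sum>j\<in>{j\<in>Nb i - {i}. c i j = 0}. F t i j)"
      using sum.inter_filter[OF finS] sum.union_disjoint finS
      by (subst sum.union_disjoint[symmetric]) (auto intro: sum.cong)
    have "(\<Sum>j\<in>{j\<in>Nb i - {i}. c i j \<noteq> 0}. 2 * norm (c i j) * Q t i j) = - (\<Sum>j\<in>{j\<in>Nb i - {i}. c i j \<noteq> 0}. F t i j)"
      using QF by (simp add: sum_negf[symmetric])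
    then have "m i * D + (\<Sum>j\<in>{j\<in>Nb i - {i}. c i j \<noteq> 0}. 2 * norm (c i j) * Q t i j)
                   - (\<Sum>j\<in>{j\<in>Nb i - {i}. c i j = 0}. F t i j) \<le> 0"
      using ineq split by simp
    then show "\<exists>D. ((\<lambda>\<tau>. eta (u i \<tau>)) has_real_derivative D) (at t)
          \<and> m i * D = (\<Sum>j\<in>Nb i - {i}. F t i j + G t i j)
          \<and> m i * D - (\<Sum>j\<in>Nb i - {i}. F t i j) \<le> 0
          \<and> m i * D + (\<Sum>j\<in>{j\<in>Nb i - {i}. c i j \<noteq> 0}. 2 * norm (c i j) * Q t i j)
                   - (\<Sum>j\<in>{j\<in>Nb i - {i}. c i j = 0}. F t i j) \<le> 0"
      using der eqD ineq by blast
  qed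
  show ?thesis using P1 P2 consQ by blast
qed

end
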